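(* Let $\mathcal{X}_0,\mathcal{X}_1$ be ri spaces over $(\Omega,\mu)$ with fundamental functions $\phi_{\mathcal{X}_0},\phi_{\mathcal{X}_1}$. Then $\phi_{\Delta(\mathcal{X}_0,\mathcal{X}_1)}=\phi_{\mathcal{X}_0}\vee\phi_{\mathcal{X}_1}$ and $\phi_{\Sigma(\mathcal{X}_0,\mathcal{X}_1)}=\phi_{\mathcal{X}_0}\wedge\phi_{\mathcal{X}_1}$.
   Context: $(\Omega,\mu)$ has $\mu(\Omega)=1$ and is purely non-atomic or completely atomic with atoms of equal measure. An ri space is a Banach function space over $(\Omega,\mu)$ with rearrangement invariant Banach function norm; fundamental function $\phi_{\mathcal{X}}(t)=\|\chi_{E_t}\|_{\mathcal{X}}$ with $\mu(E_t)=t$. $\Delta(\mathcal{X}_0,\mathcal{X}_1)=\mathcal{X}_0\cap\mathcal{X}_1$ with norm $\|f\|_{\mathcal{X}_0}\vee\|f\|_{\mathcal{X}_1}$; $\Sigma(\mathcal{X}_0,\mathcal{X}_1)=\mathcal{X}_0+\mathcal{X}_1$ with norm $\inf\{\|f_0\|_{\mathcal{X}_0}+\|f_1\|_{\mathcal{X}_1}:f=f_0+f_1,\ f_i\in\mathcal{X}_i\}$. *)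

theory Defs
  imports "HOL-Probability.Probability"
begin

definition nonatomic_measure :: "'a measure \<Rightarrow> bool" where
  "nonatomic_measure M \<longleftrightarrow>
     (\<forall>A\<in>sets M. 0 < emeasure M A \<longrightarrow>
        (\<exists>B\<in>sets M. B \<subseteq> A \<and> 0 < emeasure M B \<and> emeasure M B < emeasure M A))"

definition is_atom :: "'a measure \<Rightarrow> 'a set \<Rightarrow> bool" where
  "is_atom M A \<longleftrightarrow> A \<in> sets M \<and> 0 < emeasure M A \<and>
     (\<forall>B\<in>sets M. B \<subseteq> A \<longrightarrow> emeasure M B = 0 \<or> emeasure M B = emeasure M A)"

definition completely_atomic_equal :: "'a measure \<Rightarrow> bool" where
  "completely_atomic_equal M \<longleftrightarrow>
     (\<forall>B\<in>sets M. 0 < emeasure M B \<longrightarrow> (\<exists>A. is_atom M A \<and> A \<subseteq> B)) \<and>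
     (\<forall>A A'. is_atom M A \<longrightarrow> is_atom M A' \<longrightarrow> emeasure M A = emeasure M A')"

definition banach_function_norm :: "'a measure \<Rightarrow> (('a \<Rightarrow> ennreal) \<Rightarrow> ennreal) \<Rightarrow> bool" where
  "banach_function_norm M \<rho> \<longleftrightarrow>
     (\<forall>f\<in>borel_measurable M. \<rho> f = 0 \<longleftrightarrow> (AE x in M. f x = 0)) \<and>
     (\<forall>f\<in>borel_measurable M. \<forall>a::ennreal. a < \<infinity> \<longrightarrow> \<rho> (\<lambda>x. a * f x) = a * \<rho> f) \<and>
     (\<forall>f\<in>borel_measurable M. \<forall>g\<in>borel_measurable M. \<rho> (\<lambda>x. f x + g x) \<le> \<rho> f + \<rho> g) \<and>
     (\<forall>f\<in>borel_measurable M. \<forall>g\<in>borel_measurable M.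
        (AE x in M. g x \<le> f x) \<longrightarrow> \<rho> g \<le> \<rho> f) \<and>
     (\<forall>F f. (\<forall>n. F n \<in> borel_measurable M) \<longrightarrow> f \<in> borel_measurable M \<longrightarrow>
        (AE x in M. incseq (\<lambda>n. F n x) \<and> f x = (SUP n. F n x)) \<longrightarrow>
        \<rho> f = (SUP n. \<rho> (F n))) \<and>
     (\<forall>E\<in>sets M. emeasure M E < \<infinity> \<longrightarrow> \<rho> (indicator E) < \<infinity>) \<and>
     (\<forall>E\<in>sets M. emeasure M E < \<infinity> \<longrightarrow>
        (\<exists>C::ennreal. C < \<infinity> \<and>
           (\<forall>f\<in>borel_measurable M. (\<integral>\<^sup>+x\<in>E. f x \<partial>M) \<le> C * \<rho> f)))"

definition ri_norm :: "'a measure \<Rightarrow> (('a \<Rightarrow> ennreal) \<Rightarrow> ennreal) \<Rightarrow> bool" where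
  "ri_norm M \<rho> \<longleftrightarrow> banach_function_norm M \<rho> \<and>
     (\<forall>f\<in>borel_measurable M. \<forall>g\<in>borel_measurable M.
        (\<forall>t. emeasure M {x\<in>space M. t < f x} = emeasure M {x\<in>space M. t < g x}) \<longrightarrow>
        \<rho> f = \<rho> g)"

definition bfs :: "'a measure \<Rightarrow> (('a \<Rightarrow> ennreal) \<Rightarrow> ennreal) \<Rightarrow> ('a \<Rightarrow> real) set" where
  "bfs M \<rho> = {f. f \<in> borel_measurable M \<and> \<rho> (\<lambda>x. ennreal \<bar>f x\<bar>) < \<infinity>}"

definition bfs_norm :: "(('a \<Rightarrow> ennreal) \<Rightarrow> ennreal) \<Rightarrow> ('a \<Rightarrow> real) \<Rightarrow> ennreal" where
  "bfs_norm \<rho> f = \<rho> (\<lambda>x. ennreal \<bar>f x\<bar>)"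

text \<open>Norm of Delta(X0,X1) = X0 \<inter> X1.\<close>
definition delta_norm :: "(('a \<Rightarrow> ennreal) \<Rightarrow> ennreal) \<Rightarrow> (('a \<Rightarrow> ennreal) \<Rightarrow> ennreal)
    \<Rightarrow> ('a \<Rightarrow> real) \<Rightarrow> ennreal" where
  "delta_norm \<rho>0 \<rho>1 f = max (bfs_norm \<rho>0 f) (bfs_norm \<rho>1 f)"

text \<open>Norm of Sigma(X0,X1) = X0 + X1.\<close>
definition sigma_norm :: "'a measure \<Rightarrow> (('a \<Rightarrow> ennreal) \<Rightarrow> ennreal) \<Rightarrow> (('a \<Rightarrow> ennreal) \<Rightarrow> ennreal)
    \<Rightarrow> ('a \<Rightarrow> real) \<Rightarrow> ennreal" where
  "sigma_norm M \<rho>0 \<rho>1 f = Inf {bfs_norm \<rho>0 f0 + bfs_norm \<rho>1 f1 | f0 f1.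
      f0 \<in> bfs M \<rho>0 \<and> f1 \<in> bfs M \<rho>1 \<and> (\<forall>x\<in>space M. f x = f0 x + f1 x)}"

text \<open>Fundamental function of a norm N: phi(t) = N(chi_E) for a measurable E with mu(E) = t
  (well defined for ri norms; meaningful for t in the range of mu).\<close>
definition fundamental_function :: "'a measure \<Rightarrow> (('a \<Rightarrow> real) \<Rightarrow> ennreal) \<Rightarrow> real \<Rightarrow> ennreal" where
  "fundamental_function M N t = N (indicator (SOME E. E \<in> sets M \<and> measure M E = t))"

end

theory Submission
  imports Defs
begin


lemma bfn_zero: "banach_function_norm M \<rho> \<Longrightarrow> \<rho> (\<lambda>x. 0) = 0"
  unfolding banach_function_norm_def by auto

lemma bfn_mono: "banach_function_norm M \<rho> \<Longrightarrow> f \<in> borel_measurable M \<Longrightarrow> g \<in> borel_measurable M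
  \<Longrightarrow> (\<And>x. x \<in> space M \<Longrightarrow> g x \<le> f x) \<Longrightarrow> \<rho> g \<le> \<rho> f"
  unfolding banach_function_norm_def by auto

lemma bfn_mono_AE: "banach_function_norm M \<rho> \<Longrightarrow> f \<in> borel_measurable M \<Longrightarrow> g \<in> borel_measurable M
  \<Longrightarrow> (AE x in M. g x \<le> f x) \<Longrightarrow> \<rho> g \<le> \<rho> f"
  unfolding banach_function_norm_def by auto

lemma bfn_cmult: "banach_function_norm M \<rho> \<Longrightarrow> f \<in> borel_measurable M \<Longrightarrow> a < \<infinity>
  \<Longrightarrow> \<rho> (\<lambda>x. a * f x) = a * \<rho> f"
  unfolding banach_function_norm_def by auto

lemma bfn_add: "banach_function_norm M \<rho> \<Longrightarrow> f \<in> borel_measurable M \<Longrightarrow> g \<in> borel_measurable M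
  \<Longrightarrow> \<rho> (\<lambda>x. f x + g x) \<le> \<rho> f + \<rho> g"
  unfolding banach_function_norm_def by auto

lemma bfn_ind_fin: "banach_function_norm M \<rho> \<Longrightarrow> E \<in> sets M \<Longrightarrow> emeasure M E < \<infinity>
  \<Longrightarrow> \<rho> (indicator E) < \<infinity>"
  unfolding banach_function_norm_def by auto

lemma bfn_sum:
  assumes b: "banach_function_norm M \<rho>" and "finite K" and "\<And>k. k \<in> K \<Longrightarrow> f k \<in> borel_measurable M"
  shows "\<rho> (\<lambda>x. \<Sum>k\<in>K. f k x) \<le> (\<Sum>k\<in>K. \<rho> (f k))"
  using assms(2,3)
proof (induction K rule: finite_induct)
  case empty then show ?case using bfn_zero[OF b] by simp
next
  case (insert k K)
  have "\<rho> (\<lambda>x. \<Sum>k\<in>insert k K. f k x) = \<rho> (\<lambda>x. f k x + (\<Sum>k\<in>K. f k x))"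
    using insert by simp
  also have "\<dots> \<le> \<rho> (f k) + \<rho> (\<lambda>x. \<Sum>k\<in>K. f k x)"
    using bfn_add[OF b, of "f k" "\<lambda>x. \<Sum>k\<in>K. f k x"] insert by auto
  also have "\<dots> \<le> \<rho> (f k) + (\<Sum>k\<in>K. \<rho> (f k))"
    using insert by (intro add_left_mono) auto
  finally show ?case using insert by simp
qed

lemma sum_ind_single:
  fixes f :: "'i \<Rightarrow> ennreal"
  assumes "finite I" "disjoint_family_on P I" "i0 \<in> I" "x \<in> P i0"
  shows "(\<Sum>i\<in>I. f i * indicator (P i) x) = f i0"
proof -
  have "(\<Sum>i\<in>I. f i * indicator (P i) x) = f i0 * indicator (P i0) x + (\<Sum>i\<in>I - {i0}. f i * indicator (P i) x)"
    using assms by (intro sum.remove)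
  also have "(\<Sum>i\<in>I - {i0}. f i * indicator (P i) x) = 0"
    using assms unfolding disjoint_family_on_def by (intro sum.neutral) (auto split: split_indicator)
  finally show ?thesis using assms by simp
qed

lemma sum_ind_none:
  fixes f :: "'i \<Rightarrow> ennreal"
  assumes "\<And>i. i \<in> I \<Longrightarrow> x \<notin> P i"
  shows "(\<Sum>i\<in>I. f i * indicator (P i) x) = 0"
  using assms by (intro sum.neutral) auto

lemma shift_inj: "(i::nat) < N \<Longrightarrow> j < N \<Longrightarrow> (i + k) mod N = (j + k) mod N \<Longrightarrow> i = j"
proof (induction i j rule: linorder_wlog)
  case (le a b)
  then have "N dvd (b + k) - (a + k)" using mod_eq_dvd_iff_nat[of "a+k" "b+k" N] by simp
  then have "N dvd b - a" by simp
  moreover have "b - a < N" using le by simp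
  ultimately have "b - a = 0" using dvd_imp_le by (metis gr0I leD)
  then show ?case using le by simp
next
  case (sym a b) then show ?case by metis
qed

lemma bij_shift: "0 < N \<Longrightarrow> bij_betw (\<lambda>j. (j + k) mod N) {..<(N::nat)} {..<N}"
proof -
  assume N: "0 < N"
  have "inj_on (\<lambda>j. (j + k) mod N) {..<N}"
  proof (rule inj_onI)
    fix i j assume "i \<in> {..<N}" "j \<in> {..<N}" "(i + k) mod N = (j + k) mod N"
    then show "i = j" using shift_inj by auto
  qed
  moreover have "(\<lambda>j. (j + k) mod N) ` {..<N} \<subseteq> {..<N}" using N by auto
  ultimately show ?thesis
    by (metis card_image card_subset_eq finite_lessThan inj_on_imp_bij_betw)
qed



lemma card_bij_filter: "bij_betw f A A \<Longrightarrow> finite A \<Longrightarrow> card {j\<in>A. Q (f j)} = card {i\<in>A. Q i}"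
proof -
  assume b: "bij_betw f A A" and fin: "finite A"
  have "f ` {j\<in>A. Q (f j)} = {i\<in>A. Q i}"
    using b unfolding bij_betw_def by force
  moreover have "inj_on f {j\<in>A. Q (f j)}" using b unfolding bij_betw_def by (auto intro: inj_on_subset)
  ultimately show ?thesis by (metis card_image)
qed

lemma sum_ind_union:
  assumes "finite I" "disjoint_family_on P I"
  shows "(\<Sum>i\<in>I. (indicator (P i) x :: ennreal)) = indicator (\<Union>i\<in>I. P i) x"
proof (cases "\<exists>i\<in>I. x \<in> P i")
  case True
  then obtain i0 where "i0 \<in> I" "x \<in> P i0" by auto
  then show ?thesis using sum_ind_single[OF assms, of i0 x "\<lambda>_. 1"] by (auto simp: indicator_def)
next
  case False then show ?thesis using sum_ind_none[of I x P "\<lambda>_. 1"] by auto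
qed

lemma cyc:
  assumes ri: "ri_norm M \<rho>" and N: "0 < N"
    and P: "\<And>j. j < N \<Longrightarrow> P j \<in> sets M" and disj: "disjoint_family_on P {..<N}"
    and meq: "\<And>j. j < N \<Longrightarrow> emeasure M (P j) = c"
    and fin: "\<And>j. j < N \<Longrightarrow> a j < \<infinity>"
  shows "(\<Sum>j<N. a j) * \<rho> (indicator (\<Union>j<N. P j)) \<le> of_nat N * \<rho> (\<lambda>x. \<Sum>j<N. a j * indicator (P j) x)"
proof -
  have b: "banach_function_norm M \<rho>" using ri unfolding ri_norm_def by auto
  define sh where "sh k x = (\<Sum>j<N. a ((j+k) mod N) * indicator (P j) x)" for k x
  have meas: "sh k \<in> borel_measurable M" for k
    unfolding sh_def using P by (intro borel_measurable_sum) auto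
  have lev: "{x\<in>space M. r < sh k x} = (\<Union>j\<in>{j. j<N \<and> r < a ((j+k) mod N)}. P j)" for r k
  proof (intro equalityI subsetI)
    fix x assume x: "x \<in> {x\<in>space M. r < sh k x}"
    show "x \<in> (\<Union>j\<in>{j. j<N \<and> r < a ((j+k) mod N)}. P j)"
    proof (cases "\<exists>j<N. x \<in> P j")
      case True
      then obtain j where j: "j < N" "x \<in> P j" by auto
      then have "sh k x = a ((j+k) mod N)" unfolding sh_def
        using sum_ind_single[of "{..<N}" P j x "\<lambda>j. a ((j+k) mod N)"] disj by auto
      then show ?thesis using x j by auto
    next
      case False
      then have "sh k x = 0" unfolding sh_def by (intro sum_ind_none) auto
      then show ?thesis using x by auto
    qed
  next
    fix x assume x: "x \<in> (\<Union>j\<in>{j. j<N \<and> r < a ((j+k) mod N)}. P j)"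
    then obtain j where j: "j < N" "x \<in> P j" "r < a ((j+k) mod N)" by auto
    then have "sh k x = a ((j+k) mod N)" unfolding sh_def
      using sum_ind_single[of "{..<N}" P j x "\<lambda>j. a ((j+k) mod N)"] disj by auto
    moreover have "x \<in> space M" using P j sets.sets_into_space by blast
    ultimately show "x \<in> {x\<in>space M. r < sh k x}" using j by auto
  qed
  have dist: "emeasure M {x\<in>space M. r < sh k x} = c * of_nat (card {j. j<N \<and> r < a ((j+k) mod N)})" for r k
  proof -
    have "emeasure M {x\<in>space M. r < sh k x} = (\<Sum>j\<in>{j. j<N \<and> r < a ((j+k) mod N)}. emeasure M (P j))"
      unfolding lev using P disj
      by (intro sum_emeasure[symmetric]) (auto simp: disjoint_family_on_def)
    also have "\<dots> = (\<Sum>j\<in>{j. j<N \<and> r < a ((j+k) mod N)}. c)"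
      using meq by (intro sum.cong) auto
    finally show ?thesis by (simp add: mult.commute)
  qed
  have cardeq: "card {j. j<N \<and> r < a ((j+k) mod N)} = card {j. j<N \<and> r < a ((j+0) mod N)}" for r k
  proof -
    have "card {j\<in>{..<N}. r < a ((j+k) mod N)} = card {i\<in>{..<N}. r < a i}"
      by (rule card_bij_filter[OF bij_shift[OF N]]) auto
    moreover have "card {j\<in>{..<N}. r < a ((j+0) mod N)} = card {i\<in>{..<N}. r < a i}"
      by (rule card_bij_filter[OF bij_shift[OF N]]) auto
    ultimately show ?thesis by simp
  qed
  have rhoeq: "\<rho> (sh k) = \<rho> (sh 0)" for k
  proof -
    have "\<forall>r. emeasure M {x\<in>space M. r < sh k x} = emeasure M {x\<in>space M. r < sh 0 x}"
      using dist cardeq by simp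
    then show ?thesis using ri meas unfolding ri_norm_def by blast
  qed
  have sh0: "sh 0 = (\<lambda>x. \<Sum>j<N. a j * indicator (P j) x)"
    unfolding sh_def by (intro ext sum.cong) auto
  define A where "A = (\<Sum>j<N. a j)"
  have Afin: "A < \<infinity>" unfolding A_def using fin by (simp add: sum_Pinfty less_top)
  have inner: "(\<Sum>k<N. a ((j+k) mod N)) = A" for j
  proof -
    have "(\<Sum>k<N. a ((k+j) mod N)) = (\<Sum>k<N. a k)"
      by (rule sum.reindex_bij_betw[OF bij_shift[OF N]])
    then show ?thesis unfolding A_def by (simp add: add.commute)
  qed
  have sumsh: "(\<lambda>x. \<Sum>k<N. sh k x) = (\<lambda>x. A * indicator (\<Union>j<N. P j) x)"
  proof
    fix x
    have "(\<Sum>k<N. sh k x) = (\<Sum>j<N. \<Sum>k<N. a ((j+k) mod N) * indicator (P j) x)"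
      unfolding sh_def by (rule sum.swap)
    also have "\<dots> = (\<Sum>j<N. A * indicator (P j) x)"
      by (simp add: sum_distrib_right[symmetric] inner)
    also have "\<dots> = A * (\<Sum>j<N. indicator (P j) x)" by (simp add: sum_distrib_left)
    also have "\<dots> = A * indicator (\<Union>j<N. P j) x"
      using sum_ind_union[of "{..<N}" P x] disj by simp
    finally show "(\<Sum>k<N. sh k x) = A * indicator (\<Union>j<N. P j) x" .
  qed
  have "A * \<rho> (indicator (\<Union>j<N. P j)) = \<rho> (\<lambda>x. A * indicator (\<Union>j<N. P j) x)"
    using P by (intro bfn_cmult[OF b, symmetric] Afin) auto
  also have "\<dots> = \<rho> (\<lambda>x. \<Sum>k<N. sh k x)" using sumsh by simp
  also have "\<dots> \<le> (\<Sum>k<N. \<rho> (sh k))" by (rule bfn_sum[OF b]) (auto intro: meas)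
  also have "\<dots> = (\<Sum>k<N. \<rho> (sh 0))" by (intro sum.cong refl rhoeq)
  also have "\<dots> = of_nat N * \<rho> (sh 0)" by simp
  finally show ?thesis unfolding A_def sh0 .
qed



lemma small_set:
  assumes fm: "finite_measure M" and na: "nonatomic_measure M"
    and A: "A \<in> sets M" "0 < measure M A" and e: "0 < e"
  shows "\<exists>B\<in>sets M. B \<subseteq> A \<and> 0 < measure M B \<and> measure M B < e"
proof -
  interpret finite_measure M by (rule fm)
  have step: "\<exists>B\<in>sets M. B \<subseteq> A \<and> 0 < measure M B \<and> measure M B \<le> measure M A / 2^n" for n
  proof (induction n)
    case 0 then show ?case using A by (intro bexI[of _ A]) auto
  next
    case (Suc n)
    then obtain B where B: "B \<in> sets M" "B \<subseteq> A" "0 < measure M B" "measure M B \<le> measure M A / 2^n" by blast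
    have "0 < emeasure M B" using B by (simp add: emeasure_eq_measure)
    then obtain C where C: "C \<in> sets M" "C \<subseteq> B" "0 < emeasure M C" "emeasure M C < emeasure M B"
      using na B(1) unfolding nonatomic_measure_def by blast
    then have C': "0 < measure M C" "measure M C < measure M B"
      by (simp_all add: emeasure_eq_measure ennreal_less_iff)
    have D: "measure M (B - C) = measure M B - measure M C"
      using C B by (simp add: finite_measure_Diff)
    show ?case
    proof (cases "measure M C \<le> measure M B / 2")
      case True
      have e1: "measure M C \<le> (measure M A / 2^n) / 2" using order_trans[OF True divide_right_mono[OF B(4)]] by simp
      have e2: "(measure M A / 2^n) / 2 = measure M A / 2 ^ Suc n" by simp
      have "measure M C \<le> measure M A / 2 ^ Suc n" using e1 e2 by (rule ord_le_eq_trans)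
      then show ?thesis using C C' B by (intro bexI[of _ C]) auto
    next
      case False
      have e0: "measure M (B - C) \<le> measure M B / 2" using False D by simp
      have e1: "measure M (B - C) \<le> (measure M A / 2^n) / 2" using order_trans[OF e0 divide_right_mono[OF B(4)]] by simp
      have e2: "(measure M A / 2^n) / 2 = measure M A / 2 ^ Suc n" by simp
      have "measure M (B - C) \<le> measure M A / 2 ^ Suc n" using e1 e2 by (rule ord_le_eq_trans)
      moreover have "0 < measure M (B - C)" using D C' by simp
      ultimately show ?thesis using C B by (intro bexI[of _ "B - C"]) auto
    qed
  qed
  obtain n where n: "measure M A / e < 2^n" using real_arch_pow[of 2 "measure M A / e"] by auto
  then have "measure M A / 2^n < e" using e by (simp add: field_simps)
  moreover obtain B where "B \<in> sets M" "B \<subseteq> A" "0 < measure M B" "measure M B \<le> measure M A / 2^n"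
    using step[of n] by blast
  ultimately show ?thesis by (intro bexI[of _ B]) auto
qed

lemma sierpinski:
  assumes fm: "finite_measure M" and na: "nonatomic_measure M"
    and A: "A \<in> sets M" and m: "0 \<le> m" "m \<le> measure M A"
  shows "\<exists>B\<in>sets M. B \<subseteq> A \<and> measure M B = m"
proof -
  interpret finite_measure M by (rule fm)
  define cand where "cand B = {C \<in> sets M. C \<subseteq> A - B \<and> measure M B + measure M C \<le> m}" for B
  define val where "val B = Sup (measure M ` cand B)" for B
  have bdd: "bdd_above (measure M ` cand B)" if "B \<in> sets M" for B
  proof (rule bdd_aboveI)
    fix x assume "x \<in> measure M ` cand B"
    then obtain C where "x = measure M C" "measure M B + measure M C \<le> m" unfolding cand_def by auto
    then show "x \<le> m" using measure_nonneg[of M B] by linarith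
  qed
  have ne: "{} \<in> cand B" if "B \<in> sets M" "measure M B \<le> m" for B
    using that unfolding cand_def by auto
  have ex: "\<exists>C. C \<in> cand B \<and> val B / 2 \<le> measure M C" if B: "B \<in> sets M" "measure M B \<le> m" for B
  proof (cases "val B \<le> 0")
    case True then show ?thesis using ne[OF B] by (intro exI[of _ "{}"]) auto
  next
    case False
    then have "val B / 2 < Sup (measure M ` cand B)" unfolding val_def by simp
    then obtain x where "x \<in> measure M ` cand B" "val B / 2 < x"
      using less_cSup_iff[of "measure M ` cand B" "val B / 2"] bdd[OF B(1)] ne[OF B] by blast
    then show ?thesis by force
  qed
  define Cf where "Cf B = (SOME C. C \<in> cand B \<and> val B / 2 \<le> measure M C)" for B
  have Cf: "Cf B \<in> cand B \<and> val B / 2 \<le> measure M (Cf B)" if "B \<in> sets M" "measure M B \<le> m" for B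
    unfolding Cf_def by (rule someI_ex[OF ex[OF that]])
  define Bs where "Bs n = rec_nat {} (\<lambda>_ B. B \<union> Cf B) n" for n
  have Bs0: "Bs 0 = {}" and BsS: "Bs (Suc n) = Bs n \<union> Cf (Bs n)" for n unfolding Bs_def by simp_all
  have inv: "Bs n \<in> sets M \<and> Bs n \<subseteq> A \<and> measure M (Bs n) \<le> m" for n
  proof (induction n)
    case 0 then show ?case using Bs0 m by simp
  next
    case (Suc n)
    then have c: "Cf (Bs n) \<in> cand (Bs n)" using Cf by blast
    then have "measure M (Bs (Suc n)) = measure M (Bs n) + measure M (Cf (Bs n))"
      unfolding BsS cand_def using Suc by (intro finite_measure_Union) auto
    then show ?case using c Suc unfolding cand_def BsS by auto
  qed
  have grow: "measure M (Bs (Suc n)) = measure M (Bs n) + measure M (Cf (Bs n))"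
     and grow2: "val (Bs n) / 2 \<le> measure M (Cf (Bs n))"
     and candn: "Cf (Bs n) \<in> cand (Bs n)" for n
  proof -
    show c: "Cf (Bs n) \<in> cand (Bs n)" using Cf inv by blast
    show "measure M (Bs (Suc n)) = measure M (Bs n) + measure M (Cf (Bs n))"
      unfolding BsS using c inv[of n] unfolding cand_def by (intro finite_measure_Union) auto
    show "val (Bs n) / 2 \<le> measure M (Cf (Bs n))" using Cf inv by blast
  qed
  have inc: "incseq Bs" by (rule incseq_SucI) (simp add: BsS)
  define B where "B = (\<Union>n. Bs n)"
  have Bsets: "B \<in> sets M" unfolding B_def using inv by auto
  have BA: "B \<subseteq> A" unfolding B_def using inv by auto
  have lim: "(\<lambda>n. measure M (Bs n)) \<longlonglongrightarrow> measure M B"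
    unfolding B_def using inv inc by (intro finite_Lim_measure_incseq) auto
  have Ble: "measure M B \<le> m"
    using lim inv by (intro LIMSEQ_le_const2[OF lim]) auto
  have BsB: "measure M (Bs n) \<le> measure M B" for n
    using inv Bsets unfolding B_def by (intro finite_measure_mono) auto
  have "measure M B = m"
  proof (rule ccontr)
    assume "measure M B \<noteq> m"
    then have lt: "measure M B < m" using Ble by simp
    have "measure M (A - B) = measure M A - measure M B" using A Bsets BA by (simp add: finite_measure_Diff)
    then have pos: "0 < measure M (A - B)" using lt m by simp
    obtain D where D: "D \<in> sets M" "D \<subseteq> A - B" "0 < measure M D" "measure M D < m - measure M B"
      using small_set[OF fm na _ pos, of "m - measure M B"] lt A Bsets by auto
    have Dc: "D \<in> cand (Bs n)" for n
      using D BsB[of n] unfolding cand_def B_def by auto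
    have Dv: "measure M D \<le> val (Bs n)" for n
      unfolding val_def using Dc[of n] bdd[of "Bs n"] inv by (intro cSup_upper) auto
    have lb: "real n * (measure M D / 2) \<le> measure M (Bs n)" for n
    proof (induction n)
      case 0 then show ?case by (simp add: Bs0)
    next
      case (Suc n)
      have "measure M D / 2 \<le> measure M (Cf (Bs n))" using Dv[of n] grow2[of n] by linarith
      then show ?case using Suc grow[of n] by (simp add: algebra_simps)
    qed
    obtain n where n: "m < real n * (measure M D / 2)"
      using reals_Archimedean3[of "measure M D / 2"] D by auto
    then show False using lb[of n] inv[of n] by linarith
  qed
  then show ?thesis using Bsets BA by auto
qed

lemma split_pieces:
  assumes fm: "finite_measure M" and na: "nonatomic_measure M"
    and A: "A \<in> sets M" and c: "0 \<le> c" and n: "real n * c \<le> measure M A"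
  shows "\<exists>Q. (\<forall>j<n. Q j \<in> sets M \<and> Q j \<subseteq> A \<and> measure M (Q j) = c) \<and> disjoint_family_on Q {..<n}"
  using n
proof (induction n)
  case 0 then show ?case by (auto simp: disjoint_family_on_def)
next
  case (Suc n)
  interpret finite_measure M by (rule fm)
  have "real n * c \<le> measure M A" using Suc.prems c by (simp add: algebra_simps)
  then obtain Q where Q: "\<forall>j<n. Q j \<in> sets M \<and> Q j \<subseteq> A \<and> measure M (Q j) = c" "disjoint_family_on Q {..<n}"
    using Suc.IH by auto
  define R where "R = A - (\<Union>j<n. Q j)"
  have U: "(\<Union>j<n. Q j) \<in> sets M" using Q by auto
  have "measure M (\<Union>j<n. Q j) = (\<Sum>j<n. measure M (Q j))"
    using Q by (intro finite_measure_finite_Union) auto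
  also have "\<dots> = real n * c" using Q by simp
  finally have mU: "measure M (\<Union>j<n. Q j) = real n * c" .
  have "measure M R = measure M A - real n * c"
    unfolding R_def using A U Q mU by (subst finite_measure_Diff) auto
  then have "c \<le> measure M R" using Suc.prems by (simp add: algebra_simps)
  moreover have R: "R \<in> sets M" unfolding R_def using A U by auto
  ultimately obtain B where B: "B \<in> sets M" "B \<subseteq> R" "measure M B = c"
    using sierpinski[OF fm na R c] by auto
  have P1: "\<forall>j<Suc n. (Q(n := B)) j \<in> sets M \<and> (Q(n := B)) j \<subseteq> A \<and> measure M ((Q(n := B)) j) = c"
  proof (intro allI impI)
    fix j assume "j < Suc n"
    then show "(Q(n := B)) j \<in> sets M \<and> (Q(n := B)) j \<subseteq> A \<and> measure M ((Q(n := B)) j) = c"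
      using Q B unfolding R_def by (cases "j = n") auto
  qed
  have P2: "disjoint_family_on (Q(n := B)) {..<Suc n}"
    unfolding disjoint_family_on_def
  proof (intro ballI impI)
    fix i j assume ij: "i \<in> {..<Suc n}" "j \<in> {..<Suc n}" "i \<noteq> j"
    show "(Q(n := B)) i \<inter> (Q(n := B)) j = {}"
      using Q(2) B(2) ij unfolding R_def disjoint_family_on_def
      by (cases "i = n"; cases "j = n"; force simp: less_Suc_eq)
  qed
  show ?case using P1 P2 by blast
qed



lemma atomic_struct:
  assumes ps: "prob_space M" and ca: "completely_atomic_equal M"
  obtains a where "0 < a" and "\<And>A. A \<in> sets M \<Longrightarrow> \<exists>k Q. measure M A = real k * a \<and>
      (\<forall>j<k. Q j \<in> sets M \<and> Q j \<subseteq> A \<and> measure M (Q j) = a) \<and> disjoint_family_on Q {..<k}"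
proof -
  interpret prob_space M by (rule ps)
  have ca1: "\<And>B. B \<in> sets M \<Longrightarrow> 0 < emeasure M B \<Longrightarrow> \<exists>A. is_atom M A \<and> A \<subseteq> B"
    using ca unfolding completely_atomic_equal_def by blast
  have ca2: "\<And>A A'. is_atom M A \<Longrightarrow> is_atom M A' \<Longrightarrow> emeasure M A = emeasure M A'"
    using ca unfolding completely_atomic_equal_def by blast
  have "0 < emeasure M (space M)" using emeasure_space_1 by simp
  then obtain A0 where A0: "is_atom M A0" using ca1[OF sets.top] by blast
  define a where "a = measure M A0"
  have atom_meas: "measure M B = a" if "is_atom M B" for B
    using ca2[OF that A0] unfolding a_def by (simp add: measure_def)
  have apos: "0 < a" using A0 unfolding is_atom_def a_def by (simp add: emeasure_eq_measure)
  have claim: "\<forall>A\<in>sets M. measure M A \<le> real n * a \<longrightarrow> (\<exists>k Q. measure M A = real k * a \<and>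
      (\<forall>j<k. Q j \<in> sets M \<and> Q j \<subseteq> A \<and> measure M (Q j) = a) \<and> disjoint_family_on Q {..<k})" for n
  proof (induction n)
    case 0
    show ?case
    proof (intro ballI impI)
      fix A assume "A \<in> sets M" "measure M A \<le> real 0 * a"
      then have "measure M A = 0" using measure_nonneg[of M A] by simp
      then show "\<exists>k Q. measure M A = real k * a \<and>
      (\<forall>j<k. Q j \<in> sets M \<and> Q j \<subseteq> A \<and> measure M (Q j) = a) \<and> disjoint_family_on Q {..<k}"
        by (intro exI[of _ 0]) (auto simp: disjoint_family_on_def)
    qed
  next
    case (Suc n)
    show ?case
    proof (intro ballI impI)
      fix A assume A: "A \<in> sets M" "measure M A \<le> real (Suc n) * a"
      show "\<exists>k Q. measure M A = real k * a \<and>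
      (\<forall>j<k. Q j \<in> sets M \<and> Q j \<subseteq> A \<and> measure M (Q j) = a) \<and> disjoint_family_on Q {..<k}"
      proof (cases "measure M A = 0")
        case True then show ?thesis by (intro exI[of _ 0]) (auto simp: disjoint_family_on_def)
      next
        case False
        then have "0 < measure M A" using measure_nonneg[of M A] by linarith
        then have "0 < emeasure M A" by (simp add: emeasure_eq_measure)
        then obtain B where B: "is_atom M B" "B \<subseteq> A" using ca1[OF A(1)] by blast
        have Bs: "B \<in> sets M" using B unfolding is_atom_def by auto
        have mB: "measure M B = a" using atom_meas B by auto
        have mAB: "measure M (A - B) = measure M A - a" using A Bs B mB by (simp add: finite_measure_Diff)
        then have mle: "measure M (A - B) \<le> real n * a" using A(2) by (simp add: algebra_simps)
        moreover have "A - B \<in> sets M" using A Bs by auto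
        ultimately obtain k Q where kQ: "measure M (A - B) = real k * a"
          "\<forall>j<k. Q j \<in> sets M \<and> Q j \<subseteq> A - B \<and> measure M (Q j) = a" "disjoint_family_on Q {..<k}"
          using Suc.IH[rule_format, OF \<open>A - B \<in> sets M\<close> mle] by blast
        have P1: "\<forall>j<Suc k. (Q(k := B)) j \<in> sets M \<and> (Q(k := B)) j \<subseteq> A \<and> measure M ((Q(k := B)) j) = a"
        proof (intro allI impI)
          fix j assume j: "j < Suc k"
          show "(Q(k := B)) j \<in> sets M \<and> (Q(k := B)) j \<subseteq> A \<and> measure M ((Q(k := B)) j) = a"
          proof (cases "j = k")
            case True then show ?thesis using B Bs mB by simp
          next
            case False then have "j < k" using j by simp
            then show ?thesis using kQ(2) False by auto
          qed
        qed
        have P2: "disjoint_family_on (Q(k := B)) {..<Suc k}"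
          unfolding disjoint_family_on_def
        proof (intro ballI impI)
          fix i j assume ij: "i \<in> {..<Suc k}" "j \<in> {..<Suc k}" "i \<noteq> j"
          show "(Q(k := B)) i \<inter> (Q(k := B)) j = {}"
          proof (cases "i = k")
            case True
            then have "j < k" using ij by auto
            then show ?thesis using True ij kQ(2) by auto
          next
            case F: False
            show ?thesis
            proof (cases "j = k")
              case True
              then have "i < k" using ij F by auto
              then show ?thesis using True ij kQ(2) by auto
            next
              case False
              then have "i < k" "j < k" using ij F by auto
              then show ?thesis using kQ(3) ij F False unfolding disjoint_family_on_def by auto
            qed
          qed
        qed
        have mA: "measure M A = real (Suc k) * a" using mAB kQ(1) by (simp add: algebra_simps)
        show ?thesis
          by (rule exI[of _ "Suc k"], rule exI[of _ "Q(k:=B)"]) (intro conjI mA P1 P2)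
      qed
    qed
  qed
  obtain n where n: "1 < real n * a" using reals_Archimedean3[OF apos] by blast
  show ?thesis
  proof (rule that[OF apos])
    fix A assume A: "A \<in> sets M"
    have "measure M A \<le> 1" by (rule prob_le_1)
    then show "\<exists>k Q. measure M A = real k * a \<and>
      (\<forall>j<k. Q j \<in> sets M \<and> Q j \<subseteq> A \<and> measure M (Q j) = a) \<and> disjoint_family_on Q {..<k}"
    proof -
      have "measure M A \<le> real n * a" using \<open>measure M A \<le> 1\<close> n by linarith
      then show ?thesis using claim[of n, rule_format, OF A] by blast
    qed
  qed
qed



lemma core:
  assumes fm: "finite_measure M" and ri: "ri_norm M \<rho>"
    and c: "0 < c" and Es: "E \<in> sets M" and NE: "measure M E = real N * c" and N: "0 < N"
    and div: "\<And>A. A \<in> sets M \<Longrightarrow> \<exists>Q. (\<forall>j<nat \<lfloor>measure M A / c\<rfloor>. Q j \<in> sets M \<and> Q j \<subseteq> A \<and> measure M (Q j) = c)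
                 \<and> disjoint_family_on Q {..<nat \<lfloor>measure M A / c\<rfloor>}"
    and u: "simple_function M u" and ufin: "\<And>x. u x < \<infinity>" and u0: "\<And>x. x \<in> space M \<Longrightarrow> x \<notin> E \<Longrightarrow> u x = 0"
  shows "(\<Sum>v\<in>u ` space M - {0}. v * ennreal (c * real (nat \<lfloor>measure M {x\<in>space M. u x = v} / c\<rfloor>)))
           * \<rho> (indicator E) \<le> ennreal (measure M E) * \<rho> u"
proof -
  interpret finite_measure M by (rule fm)
  have b: "banach_function_norm M \<rho>" using ri unfolding ri_norm_def by auto
  define V where "V = u ` space M - {0}"
  define Av where "Av v = {x\<in>space M. u x = v}" for v
  define nv where "nv v = nat \<lfloor>measure M (Av v) / c\<rfloor>" for v
  have Vfin: "finite V" using u unfolding V_def simple_function_def by auto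
  have Avs: "Av v \<in> sets M" for v
  proof -
    have "Av v = u -` {v} \<inter> space M" unfolding Av_def by auto
    then show ?thesis using u simple_functionD(2)[OF u] by (cases "v \<in> u ` space M") (auto simp: vimage_def)
  qed
  have AvE: "Av v \<subseteq> E" if "v \<in> V" for v
  proof
    fix x assume "x \<in> Av v"
    then have "x \<in> space M" "u x = v" unfolding Av_def by auto
    moreover have "v \<noteq> 0" using that unfolding V_def by auto
    ultimately show "x \<in> E" using u0 by metis
  qed
  have Avdisj: "v \<noteq> w \<Longrightarrow> Av v \<inter> Av w = {}" for v w unfolding Av_def by auto
  have "\<forall>v\<in>V. \<exists>Q. (\<forall>j<nv v. Q j \<in> sets M \<and> Q j \<subseteq> Av v \<and> measure M (Q j) = c) \<and> disjoint_family_on Q {..<nv v}"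
    using div[OF Avs] unfolding nv_def by blast
  then obtain Q where Q: "\<And>v j. v \<in> V \<Longrightarrow> j < nv v \<Longrightarrow> Q v j \<in> sets M \<and> Q v j \<subseteq> Av v \<and> measure M (Q v j) = c"
      and Qd: "\<And>v. v \<in> V \<Longrightarrow> disjoint_family_on (Q v) {..<nv v}"
    by metis
  define I1 where "I1 = Sigma V (\<lambda>v. {..<nv v})"
  define PQ where "PQ p = Q (fst p) (snd p)" for p
  have I1fin: "finite I1" unfolding I1_def using Vfin by auto
  have PQ: "p \<in> I1 \<Longrightarrow> PQ p \<in> sets M \<and> PQ p \<subseteq> Av (fst p) \<and> measure M (PQ p) = c" for p
  proof -
    assume "p \<in> I1"
    then have "fst p \<in> V" "snd p < nv (fst p)" unfolding I1_def by auto
    then show ?thesis using Q unfolding PQ_def by blast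
  qed
  have PQd: "disjoint_family_on PQ I1"
    unfolding disjoint_family_on_def
  proof (intro ballI impI)
    fix p q assume pq: "p \<in> I1" "q \<in> I1" "p \<noteq> q"
    show "PQ p \<inter> PQ q = {}"
    proof (cases "fst p = fst q")
      case True
      then have "snd p \<noteq> snd q" using pq by (metis prod.expand)
      moreover have "fst p \<in> V" "snd p \<in> {..<nv (fst p)}" "snd q \<in> {..<nv (fst p)}"
        using pq True unfolding I1_def by auto
      ultimately have "Q (fst p) (snd p) \<inter> Q (fst p) (snd q) = {}"
        using Qd[of "fst p"] by (auto dest: disjoint_family_onD)
      then show ?thesis unfolding PQ_def using True by simp
    next
      case False
      then show ?thesis using PQ[OF pq(1)] PQ[OF pq(2)] Avdisj[OF False] by blast
    qed
  qed
  define W where "W = (\<Union>p\<in>I1. PQ p)"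
  have Ws: "W \<in> sets M" unfolding W_def using PQ I1fin by auto
  have WE: "W \<subseteq> E" unfolding W_def using PQ AvE unfolding I1_def by fastforce
  define S where "S = card I1"
  have mW: "measure M W = real S * c"
  proof -
    have "measure M W = (\<Sum>p\<in>I1. measure M (PQ p))"
      unfolding W_def using PQ PQd I1fin by (intro finite_measure_finite_Union) auto
    also have "\<dots> = (\<Sum>p\<in>I1. c)" using PQ by (intro sum.cong) auto
    finally show ?thesis unfolding S_def by simp
  qed
  have "real S * c \<le> real N * c" using mW NE finite_measure_mono[OF WE Es] by simp
  then have SN: "S \<le> N" using c by simp
  define R where "R = E - W"
  have Rs: "R \<in> sets M" unfolding R_def using Es Ws by auto
  have mR: "measure M R = real (N - S) * c"
    unfolding R_def using finite_measure_Diff[OF Es Ws WE] NE mW SN by (simp add: of_nat_diff algebra_simps)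
  have "nat \<lfloor>measure M R / c\<rfloor> = N - S" unfolding mR using c by simp
  then obtain Z where Z: "\<And>j. j < N - S \<Longrightarrow> Z j \<in> sets M \<and> Z j \<subseteq> R \<and> measure M (Z j) = c"
      and Zd: "disjoint_family_on Z {..<N - S}"
    using div[OF Rs] by auto
  define I where "I = I1 <+> {..<N - S}"
  define Pf where "Pf = case_sum PQ Z"
  define af :: "(ennreal \<times> nat) + nat \<Rightarrow> ennreal" where "af = case_sum (\<lambda>p. fst p) (\<lambda>j. (0::ennreal))"
  have Ifin: "finite I" unfolding I_def using I1fin by auto
  have cardI: "card I = N" unfolding I_def using I1fin SN by (simp add: card_Plus S_def)
  have Pf: "i \<in> I \<Longrightarrow> Pf i \<in> sets M \<and> Pf i \<subseteq> E \<and> measure M (Pf i) = c" for i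
    unfolding I_def Pf_def using PQ Z WE AvE unfolding R_def I1_def by (auto, blast+)
  have Pfd: "disjoint_family_on Pf I"
    unfolding disjoint_family_on_def
  proof (intro ballI impI)
    fix i j assume ij: "i \<in> I" "j \<in> I" "i \<noteq> j"
    show "Pf i \<inter> Pf j = {}"
    proof (cases i; cases j)
      fix p q assume pq: "i = Inl p" "j = Inl q"
      then have "p \<in> I1" "q \<in> I1" "p \<noteq> q" using ij unfolding I_def by auto
      then have "PQ p \<inter> PQ q = {}" by (intro disjoint_family_onD[OF PQd])
      then show ?thesis using pq unfolding Pf_def by simp
    next
      fix p q assume "i = Inl p" "j = Inr q"
      then show ?thesis using ij Z[of q] unfolding Pf_def I_def R_def W_def by auto
    next
      fix p q assume "i = Inr p" "j = Inl q"
      then show ?thesis using ij Z[of p] unfolding Pf_def I_def R_def W_def by auto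
    next
      fix p q assume pq: "i = Inr p" "j = Inr q"
      then have "p \<in> {..<N-S}" "q \<in> {..<N-S}" "p \<noteq> q" using ij unfolding I_def by auto
      then have "Z p \<inter> Z q = {}" by (intro disjoint_family_onD[OF Zd])
      then show ?thesis using pq unfolding Pf_def by simp
    qed
  qed

  obtain h where h: "bij_betw h {..<N} I"
    using ex_bij_betw_nat_finite[OF Ifin] cardI by (auto simp: atLeast0LessThan)
  have hI: "j < N \<Longrightarrow> h j \<in> I" for j using h bij_betwE by blast
  define P' where "P' j = Pf (h j)" for j
  define a' where "a' j = af (h j)" for j
  have P's: "j < N \<Longrightarrow> P' j \<in> sets M" for j unfolding P'_def using Pf hI by blast
  have P'm: "j < N \<Longrightarrow> emeasure M (P' j) = ennreal c" for j
    unfolding P'_def using Pf hI by (simp add: emeasure_eq_measure)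
  have P'd: "disjoint_family_on P' {..<N}"
    unfolding disjoint_family_on_def
  proof (intro ballI impI)
    fix i j assume ij: "i \<in> {..<N}" "j \<in> {..<N}" "i \<noteq> j"
    then have "h i \<noteq> h j" using h unfolding bij_betw_def inj_on_def by blast
    moreover have "h i \<in> I" "h j \<in> I" using ij hI by auto
    ultimately show "P' i \<inter> P' j = {}" unfolding P'_def by (intro disjoint_family_onD[OF Pfd])
  qed
  have affin: "i \<in> I \<Longrightarrow> af i < \<infinity>" for i
  proof (cases i)
    case (Inl p)
    assume "i \<in> I"
    then have "fst p \<in> V" using Inl unfolding I_def I1_def by auto
    then obtain x where "fst p = u x" unfolding V_def by auto
    then show ?thesis using Inl ufin unfolding af_def by simp
  next
    case (Inr j) then show ?thesis unfolding af_def by simp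
  qed
  have a'fin: "j < N \<Longrightarrow> a' j < \<infinity>" for j unfolding a'_def using affin hI by blast
  have cy: "(\<Sum>j<N. a' j) * \<rho> (indicator (\<Union>j<N. P' j)) \<le> of_nat N * \<rho> (\<lambda>x. \<Sum>j<N. a' j * indicator (P' j) x)"
    by (rule cyc[OF ri N P's P'd P'm a'fin])
  have sa: "(\<Sum>j<N. a' j) = (\<Sum>i\<in>I. af i)" unfolding a'_def by (rule sum.reindex_bij_betw[OF h])
  have sb: "(\<Sum>i\<in>I. af i) = (\<Sum>p\<in>I1. fst p)"
    unfolding I_def af_def using I1fin by (simp add: sum.Plus comp_def)
  have sc: "(\<Sum>p\<in>I1. fst p) = (\<Sum>v\<in>V. of_nat (nv v) * v)"
  proof -
    have "(\<Sum>v\<in>V. \<Sum>j\<in>{..<nv v}. v) = (\<Sum>(v,j)\<in>I1. v)"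
      unfolding I1_def using Vfin by (rule sum.Sigma) auto
    moreover have "(\<Sum>(v,j)\<in>I1. v) = (\<Sum>p\<in>I1. fst p)" by (simp add: case_prod_beta)
    ultimately show ?thesis by simp
  qed
  have lhs: "(\<Sum>v\<in>V. v * ennreal (c * real (nv v))) = ennreal c * (\<Sum>j<N. a' j)"
  proof -
    have "v * ennreal (c * real (nv v)) = ennreal c * (of_nat (nv v) * v)" for v
      using c by (simp add: ennreal_mult ennreal_of_nat_eq_real_of_nat mult_ac)
    then show ?thesis unfolding sa sb sc by (simp add: sum_distrib_left)
  qed
  have Ueq: "(\<Union>j<N. P' j) = (\<Union>i\<in>I. Pf i)"
  proof -
    have "h ` {..<N} = I" using h by (simp add: bij_betw_def)
    then show ?thesis unfolding P'_def by auto
  qed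
  define U where "U = (\<Union>i\<in>I. Pf i)"
  have Us: "U \<in> sets M" unfolding U_def using Pf Ifin by auto
  have UE: "U \<subseteq> E" unfolding U_def using Pf by auto
  have mU: "measure M U = real N * c"
  proof -
    have "measure M U = (\<Sum>i\<in>I. measure M (Pf i))"
      unfolding U_def using Pf Pfd Ifin by (intro finite_measure_finite_Union) auto
    also have "\<dots> = (\<Sum>i\<in>I. c)" using Pf by (intro sum.cong) auto
    finally show ?thesis using cardI by simp
  qed
  have "measure M (E - U) = 0" using finite_measure_Diff[OF Es Us UE] mU NE by simp
  then have "E - U \<in> null_sets M" using Es Us by (auto simp: null_sets_def emeasure_eq_measure)
  then have "AE x in M. x \<notin> E - U" by (rule AE_not_in)
  then have AEle: "AE x in M. indicator E x \<le> (indicator U x :: ennreal)"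
    by (rule eventually_mono) (auto split: split_indicator)
  have rEU: "\<rho> (indicator E) \<le> \<rho> (indicator U)"
    by (rule bfn_mono_AE[OF b _ _ AEle]) (use Es Us in auto)
  have seq: "(\<lambda>x. \<Sum>j<N. a' j * indicator (P' j) x) = (\<lambda>x. \<Sum>i\<in>I. af i * indicator (Pf i) x)"
    unfolding a'_def P'_def by (intro ext sum.reindex_bij_betw[OF h])
  have sle: "(\<Sum>i\<in>I. af i * indicator (Pf i) x) \<le> u x" if x: "x \<in> space M" for x
  proof (cases "\<exists>i\<in>I. x \<in> Pf i")
    case True
    then obtain i where i: "i \<in> I" "x \<in> Pf i" by auto
    have "af i \<le> u x"
    proof (cases i)
      case (Inl p)
      then have "p \<in> I1" using i unfolding I_def by auto
      then have "x \<in> Av (fst p)" using PQ[of p] i Inl unfolding Pf_def by auto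
      then show ?thesis using Inl unfolding af_def Av_def by simp
    next
      case (Inr j) then show ?thesis unfolding af_def by simp
    qed
    then show ?thesis using sum_ind_single[OF Ifin Pfd i, of af] by simp
  next
    case False
    then show ?thesis using sum_ind_none[of I x Pf af] by simp
  qed
  have smeas: "(\<lambda>x. \<Sum>i\<in>I. af i * indicator (Pf i) x) \<in> borel_measurable M"
  proof -
    have Pfs: "i \<in> I \<Longrightarrow> Pf i \<in> sets M" for i using Pf by blast
    show ?thesis using Pfs by (intro borel_measurable_sum) auto
  qed
  have rs: "\<rho> (\<lambda>x. \<Sum>i\<in>I. af i * indicator (Pf i) x) \<le> \<rho> u"
    by (rule bfn_mono[OF b borel_measurable_simple_function[OF u] smeas sle])
  have "(\<Sum>v\<in>V. v * ennreal (c * real (nv v))) * \<rho> (indicator E)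
      = ennreal c * ((\<Sum>j<N. a' j) * \<rho> (indicator E))" unfolding lhs by (simp add: mult_ac)
  also have "\<dots> \<le> ennreal c * ((\<Sum>j<N. a' j) * \<rho> (indicator U))"
    by (intro mult_left_mono rEU) auto
  also have "\<dots> \<le> ennreal c * (of_nat N * \<rho> (\<lambda>x. \<Sum>i\<in>I. af i * indicator (Pf i) x))"
    using cy unfolding Ueq U_def[symmetric] seq by (intro mult_left_mono) auto
  also have "\<dots> \<le> ennreal c * (of_nat N * \<rho> u)"
    by (intro mult_left_mono rs) auto
  also have "\<dots> = ennreal (measure M E) * \<rho> u"
    unfolding NE using c by (simp add: ennreal_mult ennreal_of_nat_eq_real_of_nat mult_ac)
  finally show ?thesis unfolding V_def nv_def Av_def .
qed



lemma int_simple: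
  assumes fm: "finite_measure M" and u: "simple_function M u"
  shows "integral\<^sup>N M u = (\<Sum>v\<in>u ` space M - {0}. v * ennreal (measure M {x\<in>space M. u x = v}))"
proof -
  interpret finite_measure M by (rule fm)
  have "integral\<^sup>N M u = (\<Sum>v\<in>u ` space M. v * emeasure M (u -` {v} \<inter> space M))"
    unfolding nn_integral_eq_simple_integral[OF u] simple_integral_def ..
  also have "\<dots> = (\<Sum>v\<in>u ` space M - {0}. v * emeasure M (u -` {v} \<inter> space M))"
    using u unfolding simple_function_def by (intro sum.mono_neutral_right) auto
  also have "\<dots> = (\<Sum>v\<in>u ` space M - {0}. v * ennreal (measure M {x\<in>space M. u x = v}))"
  proof (intro sum.cong refl)
    fix v assume "v \<in> u ` space M - {0}"
    have "u -` {v} \<inter> space M = {x\<in>space M. u x = v}" by auto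
    then show "v * emeasure M (u -` {v} \<inter> space M) = v * ennreal (measure M {x\<in>space M. u x = v})"
      by (simp add: emeasure_eq_measure)
  qed
  finally show ?thesis .
qed

lemma simple_sets:
  assumes u: "simple_function M u"
  shows "{x\<in>space M. u x = v} \<in> sets M"
proof -
  have "{x\<in>space M. u x = v} = u -` {v} \<inter> space M" by auto
  moreover have "u -` {v} \<inter> space M \<in> sets M" by (rule simple_functionD(2)[OF u])
  ultimately show ?thesis by simp
qed

lemma simple_bound:
  assumes ps: "prob_space M" and cs: "nonatomic_measure M \<or> completely_atomic_equal M"
    and ri: "ri_norm M \<rho>" and Es: "E \<in> sets M" and tpos: "0 < measure M E"
    and u: "simple_function M u" and ufin: "\<And>x. u x < \<infinity>" and u0: "\<And>x. x \<in> space M \<Longrightarrow> x \<notin> E \<Longrightarrow> u x = 0"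
  shows "integral\<^sup>N M u * \<rho> (indicator E) \<le> emeasure M E * \<rho> u"
proof -
  interpret prob_space M by (rule ps)
  have fm: "finite_measure M" by unfold_locales
  have b: "banach_function_norm M \<rho>" using ri unfolding ri_norm_def by auto
  define V where "V = u ` space M - {0}"
  define Av where "Av v = {x\<in>space M. u x = v}" for v
  have Vfin: "finite V" using u unfolding V_def simple_function_def by auto
  have Avs: "Av v \<in> sets M" for v unfolding Av_def by (rule simple_sets[OF u])
  have int: "integral\<^sup>N M u = (\<Sum>v\<in>V. v * ennreal (measure M (Av v)))"
    unfolding V_def Av_def by (rule int_simple[OF fm u])
  define \<phi> where "\<phi> = \<rho> (indicator E)"
  have phifin: "\<phi> < \<infinity>" 
  proof -
    have "emeasure M E < \<infinity>" by (simp add: emeasure_eq_measure)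
    then show ?thesis using bfn_ind_fin[OF b Es] by (simp add: \<phi>_def)
  qed
  have EE: "emeasure M E = ennreal (measure M E)" by (simp add: emeasure_eq_measure)
  show ?thesis
  proof (cases "nonatomic_measure M")
    case True
    note na = True
    define K where "K = (\<Sum>v\<in>V. v)"
    have Kfin: "K < \<infinity>"
    proof -
      have "\<forall>v\<in>V. v \<noteq> \<infinity>" unfolding V_def using ufin by (metis DiffE image_iff less_irrefl)
      then have "K \<noteq> \<infinity>" unfolding K_def using Vfin by (simp add: sum_Pinfty)
      then show ?thesis by (simp add: less_top)
    qed
    have bnd: "integral\<^sup>N M u * \<phi> \<le> emeasure M E * \<rho> u + ennreal (measure M E / real N) * K * \<phi>"
      if N: "0 < N" for N
    proof -
      define c where "c = measure M E / real N"
      have c: "0 < c" unfolding c_def using tpos N by simp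
      have NE: "measure M E = real N * c" unfolding c_def using N by simp
      have div: "\<exists>Q. (\<forall>j<nat \<lfloor>measure M A / c\<rfloor>. Q j \<in> sets M \<and> Q j \<subseteq> A \<and> measure M (Q j) = c)
                 \<and> disjoint_family_on Q {..<nat \<lfloor>measure M A / c\<rfloor>}" if A: "A \<in> sets M" for A
      proof (rule split_pieces[OF fm na A])
        show "0 \<le> c" using c by simp
        have "real (nat \<lfloor>measure M A / c\<rfloor>) \<le> measure M A / c"
          using c measure_nonneg[of M A] by (simp add: of_nat_floor)
        then show "real (nat \<lfloor>measure M A / c\<rfloor>) * c \<le> measure M A"
          using c pos_le_divide_eq by blast
      qed
      have core: "(\<Sum>v\<in>V. v * ennreal (c * real (nat \<lfloor>measure M (Av v) / c\<rfloor>))) * \<phi> \<le> ennreal (measure M E) * \<rho> u"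
        unfolding V_def Av_def \<phi>_def by (rule core[OF fm ri c Es NE N div u ufin u0])
      have mle: "measure M (Av v) \<le> c * real (nat \<lfloor>measure M (Av v) / c\<rfloor>) + c" for v
      proof -
        have "measure M (Av v) / c < real_of_int \<lfloor>measure M (Av v) / c\<rfloor> + 1" by linarith
        moreover have "real_of_int \<lfloor>measure M (Av v) / c\<rfloor> = real (nat \<lfloor>measure M (Av v) / c\<rfloor>)"
          using c measure_nonneg[of M "Av v"] by simp
        ultimately have "measure M (Av v) / c < real (nat \<lfloor>measure M (Av v) / c\<rfloor>) + 1" by simp
        then show ?thesis using c by (simp add: divide_less_eq algebra_simps)
      qed
      have "integral\<^sup>N M u \<le> (\<Sum>v\<in>V. v * ennreal (c * real (nat \<lfloor>measure M (Av v) / c\<rfloor>) + c))"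
        unfolding int by (intro sum_mono mult_left_mono ennreal_leI mle) auto
      also have "\<dots> = (\<Sum>v\<in>V. v * ennreal (c * real (nat \<lfloor>measure M (Av v) / c\<rfloor>))) + ennreal c * K"
      proof -
        have pw: "v * ennreal (c * r + c) = v * ennreal (c * r) + ennreal c * v" if r: "0 \<le> r" for v and r :: real
        proof -
          have "ennreal (c * r + c) = ennreal (c * r) + ennreal c" using c r by (intro ennreal_plus) auto
          then show ?thesis by (simp add: distrib_left mult.commute)
        qed
        have "(\<Sum>v\<in>V. v * ennreal (c * real (nat \<lfloor>measure M (Av v) / c\<rfloor>) + c))
           = (\<Sum>v\<in>V. v * ennreal (c * real (nat \<lfloor>measure M (Av v) / c\<rfloor>)) + ennreal c * v)"
          by (intro sum.cong refl pw) simp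
        also have "\<dots> = (\<Sum>v\<in>V. v * ennreal (c * real (nat \<lfloor>measure M (Av v) / c\<rfloor>))) + ennreal c * K"
          unfolding K_def by (simp add: sum.distrib sum_distrib_left)
        finally show ?thesis .
      qed
      finally have "integral\<^sup>N M u * \<phi> \<le> ((\<Sum>v\<in>V. v * ennreal (c * real (nat \<lfloor>measure M (Av v) / c\<rfloor>))) + ennreal c * K) * \<phi>"
        by (rule mult_right_mono) simp
      also have "\<dots> = (\<Sum>v\<in>V. v * ennreal (c * real (nat \<lfloor>measure M (Av v) / c\<rfloor>))) * \<phi> + ennreal c * K * \<phi>"
        by (simp add: distrib_right)
      also have "\<dots> \<le> emeasure M E * \<rho> u + ennreal c * K * \<phi>"
        using core EE by (intro add_right_mono) simp
      finally show ?thesis unfolding c_def .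
    qed
    show ?thesis
    proof (rule ennreal_le_epsilon)
      fix e :: real assume e: "0 < e"
      define Kr where "Kr = enn2real K"
      define pr where "pr = enn2real \<phi>"
      have KK: "K = ennreal Kr" unfolding Kr_def using Kfin by (cases K) auto
      have pp: "\<phi> = ennreal pr" unfolding pr_def using phifin by (cases \<phi>) auto
      have Kr0: "0 \<le> Kr" "0 \<le> pr" unfolding Kr_def pr_def by auto
      obtain N :: nat where N: "measure M E * Kr * pr / e < real N"
        using reals_Archimedean2 by blast
      have N0: "0 < N"
      proof -
        have "0 \<le> measure M E * Kr * pr / e" using Kr0 e by simp
        then show ?thesis using N by (cases N) auto
      qed
      have "measure M E / real N * Kr * pr \<le> e"
      proof -
        have "measure M E * Kr * pr < e * real N" using N e by (simp add: divide_less_eq mult_ac)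
        then show ?thesis using N0 by (simp add: divide_le_eq mult_ac)
      qed
      then have small: "ennreal (measure M E / real N) * K * \<phi> \<le> ennreal e"
        unfolding KK pp using Kr0 by (simp add: ennreal_mult[symmetric] ennreal_leI)
      have "integral\<^sup>N M u * \<phi> \<le> emeasure M E * \<rho> u + ennreal (measure M E / real N) * K * \<phi>"
        by (rule bnd[OF N0])
      also have "\<dots> \<le> emeasure M E * \<rho> u + ennreal e" by (intro add_left_mono small)
      finally show "integral\<^sup>N M u * \<rho> (indicator E) \<le> emeasure M E * \<rho> u + ennreal e"
        unfolding \<phi>_def .
    qed
  next
    case False
    then have ca: "completely_atomic_equal M" using cs by simp
    obtain a where a: "0 < a" and ast: "\<And>A. A \<in> sets M \<Longrightarrow> \<exists>k Q. measure M A = real k * a \<and>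
      (\<forall>j<k. Q j \<in> sets M \<and> Q j \<subseteq> A \<and> measure M (Q j) = a) \<and> disjoint_family_on Q {..<k}"
      using atomic_struct[OF ps ca] by metis
    have fl: "nat \<lfloor>real k * a / a\<rfloor> = k" for k using a by simp
    have div: "\<exists>Q. (\<forall>j<nat \<lfloor>measure M A / a\<rfloor>. Q j \<in> sets M \<and> Q j \<subseteq> A \<and> measure M (Q j) = a)
                 \<and> disjoint_family_on Q {..<nat \<lfloor>measure M A / a\<rfloor>}" if A: "A \<in> sets M" for A
    proof -
      obtain k Q where "measure M A = real k * a"
        "\<forall>j<k. Q j \<in> sets M \<and> Q j \<subseteq> A \<and> measure M (Q j) = a" "disjoint_family_on Q {..<k}"
        using ast[OF A] by blast
      then show ?thesis using fl[of k] by metis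
    qed
    obtain N where NE: "measure M E = real N * a" using ast[OF Es] by blast
    have N: "0 < N" using NE tpos by (cases N) auto
    have core: "(\<Sum>v\<in>V. v * ennreal (a * real (nat \<lfloor>measure M (Av v) / a\<rfloor>))) * \<phi> \<le> ennreal (measure M E) * \<rho> u"
      unfolding V_def Av_def \<phi>_def by (rule core[OF fm ri a Es NE N div u ufin u0])
    have eq: "a * real (nat \<lfloor>measure M (Av v) / a\<rfloor>) = measure M (Av v)" for v
    proof -
      obtain k where "measure M (Av v) = real k * a" using ast[OF Avs] by blast
      then show ?thesis using fl[of k] by simp
    qed
    show ?thesis using core unfolding eq int[symmetric] \<phi>_def EE .
  qed
qed



lemma Lbound:
  assumes ps: "prob_space M" and cs: "nonatomic_measure M \<or> completely_atomic_equal M"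
    and ri: "ri_norm M \<rho>" and Es: "E \<in> sets M" and g: "g \<in> borel_measurable M"
  shows "(\<integral>\<^sup>+x. g x * indicator E x \<partial>M) * \<rho> (indicator E) \<le> emeasure M E * \<rho> g"
proof (cases "measure M E = 0")
  case True
  interpret prob_space M by (rule ps)
  have "E \<in> null_sets M" using True Es by (auto simp: null_sets_def emeasure_eq_measure)
  then have "AE x in M. x \<notin> E" by (rule AE_not_in)
  then have "AE x in M. g x * indicator E x = 0" by (rule eventually_mono) auto
  then have "(\<integral>\<^sup>+x. g x * indicator E x \<partial>M) = (\<integral>\<^sup>+x. 0 \<partial>M)" by (rule nn_integral_cong_AE)
  then show ?thesis by simp
next
  case False
  interpret prob_space M by (rule ps)
  have b: "banach_function_norm M \<rho>" using ri unfolding ri_norm_def by auto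
  have tpos: "0 < measure M E" using False measure_nonneg[of M E] by linarith
  define h where "h x = g x * indicator E x" for x
  have hm: "h \<in> borel_measurable M" unfolding h_def using g Es by auto
  obtain f where f: "\<And>i. simple_function M (f i)" "incseq f" "\<And>i x. f i x < top" "\<And>x. (SUP i. f i x) = h x"
    using borel_measurable_implies_simple_function_sequence'[OF hm] by metis
  have fle: "f i x \<le> h x" for i x
  proof -
    have "f i x \<le> (SUP i. f i x)" by (rule SUP_upper) simp
    then show ?thesis using f(4) by simp
  qed
  have f0: "x \<in> space M \<Longrightarrow> x \<notin> E \<Longrightarrow> f i x = 0" for i x
    using fle[of i x] unfolding h_def by simp
  have fm: "f i \<in> borel_measurable M" for i using f(1) by (rule borel_measurable_simple_function)
  have fg: "\<rho> (f i) \<le> \<rho> g" for i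
  proof (rule bfn_mono[OF b g fm])
    fix x assume "x \<in> space M"
    have "h x \<le> g x" unfolding h_def by (simp split: split_indicator)
    then show "f i x \<le> g x" using fle[of i x] by simp
  qed
  have each: "integral\<^sup>N M (f i) * \<rho> (indicator E) \<le> emeasure M E * \<rho> g" for i
  proof -
    have "integral\<^sup>N M (f i) * \<rho> (indicator E) \<le> emeasure M E * \<rho> (f i)"
      by (rule simple_bound[OF ps cs ri Es tpos f(1)[of i]]) (use f(3) f0 in auto)
    also have "\<dots> \<le> emeasure M E * \<rho> g" by (intro mult_left_mono fg) simp
    finally show ?thesis .
  qed
  have "(\<integral>\<^sup>+x. g x * indicator E x \<partial>M) = (\<integral>\<^sup>+x. (SUP i. f i x) \<partial>M)"
    using f(4) unfolding h_def by simp
  also have "\<dots> = (SUP i. integral\<^sup>N M (f i))"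
    by (rule nn_integral_monotone_convergence_SUP[OF f(2) fm])
  finally have "(\<integral>\<^sup>+x. g x * indicator E x \<partial>M) * \<rho> (indicator E) = (SUP i. integral\<^sup>N M (f i) * \<rho> (indicator E))"
    by (simp add: SUP_mult_right_ennreal)
  also have "\<dots> \<le> emeasure M E * \<rho> g" by (rule SUP_least) (rule each)
  finally show ?thesis .
qed

lemma absmeas: "(f :: 'a \<Rightarrow> real) \<in> borel_measurable M \<Longrightarrow> (\<lambda>x. ennreal \<bar>f x\<bar>) \<in> borel_measurable M"
  by measurable



theorem lemma40:
  fixes M :: "'a measure" and \<rho>0 \<rho>1 :: "('a \<Rightarrow> ennreal) \<Rightarrow> ennreal" and t :: real
  assumes "prob_space M"
    and "nonatomic_measure M \<or> completely_atomic_equal M"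
    and "ri_norm M \<rho>0" and "ri_norm M \<rho>1"
    and "t \<in> measure M ` sets M"
  shows "fundamental_function M (delta_norm \<rho>0 \<rho>1) t
           = max (fundamental_function M (bfs_norm \<rho>0) t) (fundamental_function M (bfs_norm \<rho>1) t)
         \<and> fundamental_function M (sigma_norm M \<rho>0 \<rho>1) t
           = min (fundamental_function M (bfs_norm \<rho>0) t) (fundamental_function M (bfs_norm \<rho>1) t)"
proof -
  note ps = assms(1) and cs = assms(2) and ri0 = assms(3) and ri1 = assms(4)
  interpret prob_space M by (rule ps)
  have b0: "banach_function_norm M \<rho>0" using ri0 unfolding ri_norm_def by auto
  have b1: "banach_function_norm M \<rho>1" using ri1 unfolding ri_norm_def by auto
  define E where "E = (SOME E. E \<in> sets M \<and> measure M E = t)"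
  have "\<exists>E. E \<in> sets M \<and> measure M E = t" using assms(5) by auto
  then have E: "E \<in> sets M \<and> measure M E = t" unfolding E_def by (rule someI_ex)
  then have Es: "E \<in> sets M" by simp
  have ff: "fundamental_function M N t = N (indicator E)" for N
    unfolding fundamental_function_def E_def ..
  have absind: "(\<lambda>x. ennreal \<bar>indicator E x :: real\<bar>) = indicator E"
    by (rule ext) (simp split: split_indicator)
  have absind2: "(\<lambda>x. ennreal (indicator E x :: real)) = indicator E"
    by (rule ext) (simp split: split_indicator)
  have bn: "bfs_norm \<rho> (indicator E) = \<rho> (indicator E)" for \<rho>
    unfolding bfs_norm_def absind ..
  have part1: "fundamental_function M (delta_norm \<rho>0 \<rho>1) t
           = max (fundamental_function M (bfs_norm \<rho>0) t) (fundamental_function M (bfs_norm \<rho>1) t)"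
    unfolding ff delta_norm_def ..
  define \<phi>0 where "\<phi>0 = \<rho>0 (indicator E)"
  define \<phi>1 where "\<phi>1 = \<rho>1 (indicator E)"
  define SS where "SS = {bfs_norm \<rho>0 f0 + bfs_norm \<rho>1 f1 | f0 f1.
      f0 \<in> bfs M \<rho>0 \<and> f1 \<in> bfs M \<rho>1 \<and> (\<forall>x\<in>space M. (indicator E x :: real) = f0 x + f1 x)}"
  have sn: "sigma_norm M \<rho>0 \<rho>1 (indicator E) = Inf SS" unfolding sigma_norm_def SS_def ..
  have Efin: "emeasure M E < \<infinity>" by (simp add: emeasure_eq_measure)
  have indm: "(indicator E :: 'a \<Rightarrow> real) \<in> borel_measurable M" using Es by simp
  have zero_bfs0: "(\<lambda>x. 0::real) \<in> bfs M \<rho>0" unfolding bfs_def using bfn_zero[OF b0] by simp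
  have zero_bfs1: "(\<lambda>x. 0::real) \<in> bfs M \<rho>1" unfolding bfs_def using bfn_zero[OF b1] by simp
  have ind_bfs0: "indicator E \<in> bfs M \<rho>0" using indm bfn_ind_fin[OF b0 Es Efin] by (simp add: bfs_def absind absind2)
  have ind_bfs1: "indicator E \<in> bfs M \<rho>1" using indm bfn_ind_fin[OF b1 Es Efin] by (simp add: bfs_def absind absind2)
  have bz0: "bfs_norm \<rho>0 (\<lambda>x. 0) = 0" unfolding bfs_norm_def using bfn_zero[OF b0] by simp
  have bz1: "bfs_norm \<rho>1 (\<lambda>x. 0) = 0" unfolding bfs_norm_def using bfn_zero[OF b1] by simp
  have up0: "Inf SS \<le> \<phi>0"
  proof (rule Inf_lower2)
    show "bfs_norm \<rho>0 (indicator E) + bfs_norm \<rho>1 (\<lambda>x. 0) \<in> SS"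
      unfolding SS_def using ind_bfs0 zero_bfs1 by force
    show "bfs_norm \<rho>0 (indicator E) + bfs_norm \<rho>1 (\<lambda>x. 0) \<le> \<phi>0" unfolding bz1 bn \<phi>0_def by simp
  qed
  have up1: "Inf SS \<le> \<phi>1"
  proof (rule Inf_lower2)
    show "bfs_norm \<rho>0 (\<lambda>x. 0) + bfs_norm \<rho>1 (indicator E) \<in> SS"
      unfolding SS_def using ind_bfs1 zero_bfs0 by force
    show "bfs_norm \<rho>0 (\<lambda>x. 0) + bfs_norm \<rho>1 (indicator E) \<le> \<phi>1" unfolding bz0 bn \<phi>1_def by simp
  qed
  have low: "min \<phi>0 \<phi>1 \<le> Inf SS"
  proof (rule Inf_greatest)
    fix z assume "z \<in> SS"
    then obtain f0 f1 where z: "z = bfs_norm \<rho>0 f0 + bfs_norm \<rho>1 f1" and f0: "f0 \<in> bfs M \<rho>0" and f1: "f1 \<in> bfs M \<rho>1"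
      and dec: "\<forall>x\<in>space M. (indicator E x :: real) = f0 x + f1 x"
      unfolding SS_def by blast
    define g0 where "g0 x = ennreal \<bar>f0 x\<bar>" for x
    define g1 where "g1 x = ennreal \<bar>f1 x\<bar>" for x
    have g0m: "g0 \<in> borel_measurable M" unfolding g0_def using f0 unfolding bfs_def by (intro absmeas) auto
    have g1m: "g1 \<in> borel_measurable M" unfolding g1_def using f1 unfolding bfs_def by (intro absmeas) auto
    have zz: "z = \<rho>0 g0 + \<rho>1 g1" unfolding z bfs_norm_def g0_def g1_def ..
    show "min \<phi>0 \<phi>1 \<le> z"
    proof (cases "measure M E = 0")
      case True
      have "E \<in> null_sets M" using True Es by (auto simp: null_sets_def emeasure_eq_measure)
      then have "AE x in M. x \<notin> E" by (rule AE_not_in)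
      then have "AE x in M. (indicator E x :: ennreal) = 0" by (rule eventually_mono) auto
      then have "\<phi>0 = 0" unfolding \<phi>0_def using b0 Es unfolding banach_function_norm_def by auto
      then show ?thesis by simp
    next
      case False
      define T where "T = emeasure M E"
      have T0: "T \<noteq> 0" unfolding T_def using False by (simp add: emeasure_eq_measure)
      have Tt: "T \<noteq> top" unfolding T_def by (simp add: emeasure_eq_measure)
      define I0 where "I0 = (\<integral>\<^sup>+x. g0 x * indicator E x \<partial>M)"
      define I1 where "I1 = (\<integral>\<^sup>+x. g1 x * indicator E x \<partial>M)"
      have L0: "I0 * \<phi>0 \<le> T * \<rho>0 g0" unfolding I0_def \<phi>0_def T_def by (rule Lbound[OF ps cs ri0 Es g0m])
      have L1: "I1 * \<phi>1 \<le> T * \<rho>1 g1" unfolding I1_def \<phi>1_def T_def by (rule Lbound[OF ps cs ri1 Es g1m])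
      have "T = (\<integral>\<^sup>+x. indicator E x \<partial>M)" unfolding T_def using Es by simp
      also have "\<dots> \<le> (\<integral>\<^sup>+x. g0 x * indicator E x + g1 x * indicator E x \<partial>M)"
      proof (rule nn_integral_mono)
        fix x assume x: "x \<in> space M"
        show "indicator E x \<le> g0 x * indicator E x + g1 x * indicator E x"
        proof (cases "x \<in> E")
          case True
          then have "1 = f0 x + f1 x" using dec x by (metis indicator_simps(1))
          then have "1 \<le> \<bar>f0 x\<bar> + \<bar>f1 x\<bar>" by linarith
          then have "ennreal 1 \<le> ennreal (\<bar>f0 x\<bar> + \<bar>f1 x\<bar>)" by (rule ennreal_leI)
          then have "1 \<le> g0 x + g1 x" unfolding g0_def g1_def by (simp add: ennreal_plus)
          then show ?thesis using True by simp
        next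
          case False then show ?thesis by simp
        qed
      qed
      also have "\<dots> = I0 + I1" unfolding I0_def I1_def using g0m g1m Es by (intro nn_integral_add) auto
      finally have TI: "T \<le> I0 + I1" .
      have "T * min \<phi>0 \<phi>1 \<le> (I0 + I1) * min \<phi>0 \<phi>1" by (intro mult_right_mono TI) simp
      also have "\<dots> = I0 * min \<phi>0 \<phi>1 + I1 * min \<phi>0 \<phi>1" by (simp add: distrib_right)
      also have "\<dots> \<le> I0 * \<phi>0 + I1 * \<phi>1" by (intro add_mono mult_left_mono) auto
      also have "\<dots> \<le> T * \<rho>0 g0 + T * \<rho>1 g1" by (intro add_mono L0 L1)
      also have "\<dots> = T * z" unfolding zz by (simp add: distrib_left)
      finally show ?thesis using ennreal_mult_le_mult_iff[OF T0 Tt] by simp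
    qed
  qed
  have part2: "fundamental_function M (sigma_norm M \<rho>0 \<rho>1) t
           = min (fundamental_function M (bfs_norm \<rho>0) t) (fundamental_function M (bfs_norm \<rho>1) t)"
    unfolding ff sn bn \<phi>0_def[symmetric] \<phi>1_def[symmetric]
    using up0 up1 low by (intro antisym) auto
  show ?thesis using part1 part2 by blast
qed


end
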